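(* Let $\mathcal{C}$ be a category, $J$ a directed partially ordered set, and let $(f,f^j_\mu),(f',f'^j_\mu):\boldsymbol{X}\to\boldsymbol{Y}$ and $(g,g^j_\nu),(g',g'^j_\nu):\boldsymbol{Y}\to\boldsymbol{Z}$ be $J$-morphisms of inverse systems in $\mathcal{C}$. If $(f,f^j_\mu)\sim(f',f'^j_\mu)$ and $(g,g^j_\nu)\sim(g',g'^j_\nu)$, then $(g,g^j_\nu)(f,f^j_\mu)\sim(g',g'^j_\nu)(f',f'^j_\mu)$.
   Context: An inverse system $\boldsymbol{X}=(X_\lambda,p_{\lambda\lambda'},\Lambda)$ in $\mathcal{C}$: $\Lambda$ directed preordered, morphisms $p_{\lambda\lambda'}:X_{\lambda'}\to X_\lambda$ for $\lambda\le\lambda'$, $p_{\lambda\lambda}=1$, $p_{\lambda\lambda'}p_{\lambda'\lambda''}=p_{\lambda\lambda''}$; similarly $\boldsymbol{Y}=(Y_\mu,q_{\mu\mu'},M)$, $\boldsymbol{Z}=(Z_\nu,r_{\nu\nu'},N)$. A $J$-morphism $(f,f^j_\mu):\boldsymbol{X}\to\boldsymbol{Y}$ consists of $f:M\to\Lambda$ and $\mathcal{C}$-morphisms $f^j_\mu:X_{f(\mu)}\to Y_\mu$ ($\mu\in M$, $j\in J$) such that for all $\mu\le\mu'$ there exist $\lambda\ge f(\mu),f(\mu')$ and $j_0$ with $f^{j'}_\mu p_{f(\mu)\lambda}=q_{\mu\mu'}f^{j'}_{\mu'}p_{f(\mu')\lambda}$ for all $j'\ge j_0$. Composition: $(g,g^j_\nu)(f,f^j_\mu)=(fg,g^j_\nu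 f^j_{g(\nu)})$. $(f,f^j_\mu)\sim(f',f'^j_\mu)$ iff for every $\mu$ there exist $\lambda\ge f(\mu),f'(\mu)$ and $j_0$ with $f^{j'}_\mu p_{f(\mu)\lambda}=f'^{j'}_\mu p_{f'(\mu)\lambda}$ for all $j'\ge j_0$ (analogously for morphisms $\boldsymbol{Y}\to\boldsymbol{Z}$ and $\boldsymbol{X}\to\boldsymbol{Z}$). *)

theory Defs
  imports Main
begin

record ('o, 'm) cat =
  Obj  :: "'o set"
  Mor  :: "'m set"
  Dom  :: "'m \<Rightarrow> 'o"
  Cod  :: "'m \<Rightarrow> 'o"
  Id   :: "'o \<Rightarrow> 'm"
  Comp :: "'m \<Rightarrow> 'm \<Rightarrow> 'm"   (* Comp C g f = g \<circ> f, defined when Dom g = Cod f *)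

definition category :: "('o, 'm, 'x) cat_scheme \<Rightarrow> bool" where
  "category C \<longleftrightarrow>
     (\<forall>h\<in>Mor C. Dom C h \<in> Obj C \<and> Cod C h \<in> Obj C) \<and>
     (\<forall>a\<in>Obj C. Id C a \<in> Mor C \<and> Dom C (Id C a) = a \<and> Cod C (Id C a) = a) \<and>
     (\<forall>g\<in>Mor C. \<forall>h\<in>Mor C. Dom C g = Cod C h \<longrightarrow>
        Comp C g h \<in> Mor C \<and> Dom C (Comp C g h) = Dom C h \<and> Cod C (Comp C g h) = Cod C g) \<and>
     (\<forall>h\<in>Mor C. Comp C h (Id C (Dom C h)) = h \<and> Comp C (Id C (Cod C h)) h = h) \<and>
     (\<forall>k\<in>Mor C. \<forall>g\<in>Mor C. \<forall>h\<in>Mor C. Dom C k = Cod C g \<longrightarrow> Dom C g = Cod C h \<longrightarrow>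
        Comp C k (Comp C g h) = Comp C (Comp C k g) h)"

definition directed :: "'a::preorder set \<Rightarrow> bool" where
  "directed A \<longleftrightarrow> A \<noteq> {} \<and> (\<forall>a\<in>A. \<forall>b\<in>A. \<exists>c\<in>A. a \<le> c \<and> b \<le> c)"

definition inverse_system ::
  "('o, 'm, 'x) cat_scheme \<Rightarrow> ('l::preorder \<Rightarrow> 'o) \<Rightarrow> ('l \<Rightarrow> 'l \<Rightarrow> 'm) \<Rightarrow> bool" where
  "inverse_system C X p \<longleftrightarrow>
     directed (UNIV :: 'l set) \<and>
     (\<forall>l. X l \<in> Obj C) \<and>
     (\<forall>l l'. l \<le> l' \<longrightarrow> p l l' \<in> Mor C \<and> Dom C (p l l') = X l' \<and> Cod C (p l l') = X l) \<and>
     (\<forall>l. p l l = Id C (X l)) \<and>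
     (\<forall>l l' l''. l \<le> l' \<longrightarrow> l' \<le> l'' \<longrightarrow> Comp C (p l l') (p l' l'') = p l l'')"

text \<open>A J-morphism (f, F) : (X,p) \<rightarrow> (Y,q), with F j mu = f^j_mu : X (f mu) \<rightarrow> Y mu;
  the directed poset J is the index type 'j.\<close>

definition J_morphism ::
  "('o, 'm, 'x) cat_scheme \<Rightarrow> ('l::preorder \<Rightarrow> 'o) \<Rightarrow> ('l \<Rightarrow> 'l \<Rightarrow> 'm)
   \<Rightarrow> ('u::preorder \<Rightarrow> 'o) \<Rightarrow> ('u \<Rightarrow> 'u \<Rightarrow> 'm)
   \<Rightarrow> ('u \<Rightarrow> 'l) \<times> ('j::order \<Rightarrow> 'u \<Rightarrow> 'm) \<Rightarrow> bool" where
  "J_morphism C X p Y q fF \<longleftrightarrow>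
     (\<forall>j u. snd fF j u \<in> Mor C \<and> Dom C (snd fF j u) = X (fst fF u) \<and> Cod C (snd fF j u) = Y u) \<and>
     (\<forall>u u'. u \<le> u' \<longrightarrow>
        (\<exists>l. fst fF u \<le> l \<and> fst fF u' \<le> l \<and>
          (\<exists>j0. \<forall>j'. j0 \<le> j' \<longrightarrow>
             Comp C (snd fF j' u) (p (fst fF u) l) =
             Comp C (q u u') (Comp C (snd fF j' u') (p (fst fF u') l)))))"

definition J_comp ::
  "('o, 'm, 'x) cat_scheme \<Rightarrow> ('v \<Rightarrow> 'u) \<times> ('j \<Rightarrow> 'v \<Rightarrow> 'm)
   \<Rightarrow> ('u \<Rightarrow> 'l) \<times> ('j \<Rightarrow> 'u \<Rightarrow> 'm) \<Rightarrow> ('v \<Rightarrow> 'l) \<times> ('j \<Rightarrow> 'v \<Rightarrow> 'm)" where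
  "J_comp C gG fF = (fst fF \<circ> fst gG, \<lambda>j v. Comp C (snd gG j v) (snd fF j (fst gG v)))"

definition J_equiv ::
  "('o, 'm, 'x) cat_scheme \<Rightarrow> ('l::preorder \<Rightarrow> 'l \<Rightarrow> 'm)
   \<Rightarrow> ('u \<Rightarrow> 'l) \<times> ('j::order \<Rightarrow> 'u \<Rightarrow> 'm) \<Rightarrow> ('u \<Rightarrow> 'l) \<times> ('j \<Rightarrow> 'u \<Rightarrow> 'm) \<Rightarrow> bool" where
  "J_equiv C p fF fF' \<longleftrightarrow>
     (\<forall>u. \<exists>l. fst fF u \<le> l \<and> fst fF' u \<le> l \<and>
        (\<exists>j0. \<forall>j'. j0 \<le> j' \<longrightarrow>
           Comp C (snd fF j' u) (p (fst fF u) l) = Comp C (snd fF' j' u) (p (fst fF' u) l)))"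

end

theory Submission
  imports Defs
begin

lemma cat_comp:
  assumes "category C" "g \<in> Mor C" "h \<in> Mor C" "Dom C g = Cod C h"
  shows "Comp C g h \<in> Mor C" "Dom C (Comp C g h) = Dom C h" "Cod C (Comp C g h) = Cod C g"
  using assms unfolding category_def by auto

lemma cat_assoc:
  assumes "category C" "k \<in> Mor C" "g \<in> Mor C" "h \<in> Mor C" "Dom C k = Cod C g" "Dom C g = Cod C h"
  shows "Comp C k (Comp C g h) = Comp C (Comp C k g) h"
  using assms unfolding category_def by auto

lemma isys:
  assumes "inverse_system C X p" "l \<le> l'"
  shows "p l l' \<in> Mor C" "Dom C (p l l') = X l'" "Cod C (p l l') = X l"
  using assms unfolding inverse_system_def by auto

lemma isys_trans:
  assumes "inverse_system C X p" "l \<le> l'" "l' \<le> l''"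
  shows "Comp C (p l l') (p l' l'') = p l l''"
  using assms unfolding inverse_system_def by auto

lemma shift:
  assumes "category C" "inverse_system C X p" "h \<in> Mor C" "Dom C h = X a" "a \<le> l1" "l1 \<le> l"
  shows "Comp C h (p a l) = Comp C (Comp C h (p a l1)) (p l1 l)"
proof -
  have "p a l = Comp C (p a l1) (p l1 l)" using isys_trans[OF assms(2,5,6)] by simp
  then show ?thesis using assms isys[OF assms(2,5)] isys[OF assms(2,6)]
    by (simp add: cat_assoc)
qed

lemma dir2:
  assumes "directed (UNIV :: 'a::preorder set)"
  shows "\<exists>c::'a. a \<le> c \<and> b \<le> c"
  using assms unfolding directed_def by auto

lemma dir3:
  assumes "directed (UNIV :: 'a::preorder set)"
  shows "\<exists>c::'a. a \<le> c \<and> b \<le> c \<and> d \<le> c"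
proof -
  obtain e where "a \<le> e" "b \<le> e" using dir2[OF assms] by blast
  moreover obtain c where "e \<le> c" "d \<le> c" using dir2[OF assms] by blast
  ultimately show ?thesis using order_trans by blast
qed

lemma dir4:
  assumes "directed (UNIV :: 'a::preorder set)"
  shows "\<exists>c::'a. a \<le> c \<and> b \<le> c \<and> d \<le> c \<and> e \<le> c"
proof -
  obtain x where "a \<le> x" "b \<le> x" "d \<le> x" using dir3[OF assms] by blast
  moreover obtain c where "x \<le> c" "e \<le> c" using dir2[OF assms] by blast
  ultimately show ?thesis using order_trans by blast
qed

lemma key:
  assumes C: "category C" and Xs: "inverse_system C X p" and Ys: "inverse_system C Y q"
    and fm: "J_morphism C X p Y q fF"
    and um: "u \<le> m"
    and l1: "fst fF u \<le> l1" "fst fF m \<le> l1" "l1 \<le> l"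
    and eq: "Comp C (snd fF j u) (p (fst fF u) l1) =
             Comp C (q u m) (Comp C (snd fF j m) (p (fst fF m) l1))"
  shows "Comp C (snd fF j u) (p (fst fF u) l) =
         Comp C (q u m) (Comp C (snd fF j m) (p (fst fF m) (l::'l::preorder)))"
proof -
  have B: "snd fF j u \<in> Mor C" "Dom C (snd fF j u) = X (fst fF u)" "Cod C (snd fF j u) = Y u"
    "snd fF j m \<in> Mor C" "Dom C (snd fF j m) = X (fst fF m)" "Cod C (snd fF j m) = Y m"
    using fm unfolding J_morphism_def by auto
  note P1 = isys[OF Xs l1(2)] and P2 = isys[OF Xs l1(3)] and Q = isys[OF Ys um]
  have E: "Comp C (snd fF j m) (p (fst fF m) l1) \<in> Mor C"
    "Dom C (Comp C (snd fF j m) (p (fst fF m) l1)) = X l1"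
    "Cod C (Comp C (snd fF j m) (p (fst fF m) l1)) = Y m"
    using cat_comp[OF C B(4) P1(1)] B P1 by auto
  have "Comp C (snd fF j u) (p (fst fF u) l) = Comp C (Comp C (snd fF j u) (p (fst fF u) l1)) (p l1 l)"
    using shift[OF C Xs B(1) B(2) l1(1) l1(3)] .
  also have "\<dots> = Comp C (Comp C (q u m) (Comp C (snd fF j m) (p (fst fF m) l1))) (p l1 l)"
    using eq by simp
  also have "\<dots> = Comp C (q u m) (Comp C (Comp C (snd fF j m) (p (fst fF m) l1)) (p l1 l))"
    using cat_assoc[OF C Q(1) E(1) P2(1)] Q E P2 by simp
  also have "\<dots> = Comp C (q u m) (Comp C (snd fF j m) (p (fst fF m) l))"
    using shift[OF C Xs B(4) B(5) l1(2) l1(3)] by simp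
  finally show ?thesis .
qed

lemma key2:
  assumes C: "category C" and Xs: "inverse_system C X p"
    and fm: "J_morphism C X p Y q fF" and fm': "J_morphism C X p Y q fF'"
    and l3: "fst fF m \<le> l3" "fst fF' m \<le> l3" "l3 \<le> l"
    and eq: "Comp C (snd fF j m) (p (fst fF m) l3) = Comp C (snd fF' j m) (p (fst fF' m) l3)"
  shows "Comp C (snd fF j m) (p (fst fF m) l) = Comp C (snd fF' j m) (p (fst fF' m) (l::'l::preorder))"
proof -
  have B: "snd fF j m \<in> Mor C" "Dom C (snd fF j m) = X (fst fF m)"
    "snd fF' j m \<in> Mor C" "Dom C (snd fF' j m) = X (fst fF' m)"
    using fm fm' unfolding J_morphism_def by auto
  show ?thesis
    using shift[OF C Xs B(1) B(2) l3(1) l3(3)] shift[OF C Xs B(3) B(4) l3(2) l3(3)] eq by simp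
qed

theorem lemma4:
  fixes C :: "('o, 'm, 'x) cat_scheme"
    and X :: "'l::preorder \<Rightarrow> 'o" and p :: "'l \<Rightarrow> 'l \<Rightarrow> 'm"
    and Y :: "'u::preorder \<Rightarrow> 'o" and q :: "'u \<Rightarrow> 'u \<Rightarrow> 'm"
    and Z :: "'v::preorder \<Rightarrow> 'o" and r :: "'v \<Rightarrow> 'v \<Rightarrow> 'm"
    and fF fF' :: "('u \<Rightarrow> 'l) \<times> ('j::order \<Rightarrow> 'u \<Rightarrow> 'm)"
    and gG gG' :: "('v \<Rightarrow> 'u) \<times> ('j \<Rightarrow> 'v \<Rightarrow> 'm)"
  assumes "category C"
    and "directed (UNIV :: 'j set)"
    and "inverse_system C X p" and "inverse_system C Y q" and "inverse_system C Z r"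
    and "J_morphism C X p Y q fF" and "J_morphism C X p Y q fF'"
    and "J_morphism C Y q Z r gG" and "J_morphism C Y q Z r gG'"
    and "J_equiv C p fF fF'" and "J_equiv C q gG gG'"
  shows "J_equiv C p (J_comp C gG fF) (J_comp C gG' fF')"
  unfolding J_equiv_def
proof
  fix v
  note C = assms(1) and dJ = assms(2) and Xs = assms(3) and Ys = assms(4)
  have dL: "directed (UNIV :: 'l set)" using Xs unfolding inverse_system_def by simp
  define u where "u = fst gG v"
  define u' where "u' = fst gG' v"
  obtain m j1 where m: "u \<le> m" "u' \<le> m"
    and e1: "\<And>j. j1 \<le> j \<Longrightarrow> Comp C (snd gG j v) (q u m) = Comp C (snd gG' j v) (q u' m)"
    using assms(11) unfolding J_equiv_def u_def u'_def by blast
  obtain l1 j2 where l1: "fst fF u \<le> l1" "fst fF m \<le> l1"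
    and e2: "\<And>j. j2 \<le> j \<Longrightarrow> Comp C (snd fF j u) (p (fst fF u) l1) =
             Comp C (q u m) (Comp C (snd fF j m) (p (fst fF m) l1))"
    using assms(6) m(1) unfolding J_morphism_def by blast
  obtain l2 j3 where l2: "fst fF' u' \<le> l2" "fst fF' m \<le> l2"
    and e3: "\<And>j. j3 \<le> j \<Longrightarrow> Comp C (snd fF' j u') (p (fst fF' u') l2) =
             Comp C (q u' m) (Comp C (snd fF' j m) (p (fst fF' m) l2))"
    using assms(7) m(2) unfolding J_morphism_def by blast
  obtain l3 j4 where l3: "fst fF m \<le> l3" "fst fF' m \<le> l3"
    and e4: "\<And>j. j4 \<le> j \<Longrightarrow> Comp C (snd fF j m) (p (fst fF m) l3) = Comp C (snd fF' j m) (p (fst fF' m) l3)"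
    using assms(10) unfolding J_equiv_def by blast
  obtain l where l: "l1 \<le> l" "l2 \<le> l" "l3 \<le> l" using dir3[OF dL] by blast
  obtain j0 where j0: "j1 \<le> j0" "j2 \<le> j0" "j3 \<le> j0" "j4 \<le> j0" using dir4[OF dJ] by blast
  have "\<forall>j'. j0 \<le> j' \<longrightarrow>
      Comp C (Comp C (snd gG j' v) (snd fF j' u)) (p (fst fF u) l) =
      Comp C (Comp C (snd gG' j' v) (snd fF' j' u')) (p (fst fF' u') l)"
  proof (intro allI impI)
    fix j assume "j0 \<le> j"
    then have jj: "j1 \<le> j" "j2 \<le> j" "j3 \<le> j" "j4 \<le> j" using j0 order_trans by blast+
    have A: "snd gG j v \<in> Mor C" "Dom C (snd gG j v) = Y u"
      "snd gG' j v \<in> Mor C" "Dom C (snd gG' j v) = Y u'"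
      using assms(8,9) unfolding J_morphism_def u_def u'_def by auto
    have B: "snd fF j u \<in> Mor C" "Dom C (snd fF j u) = X (fst fF u)" "Cod C (snd fF j u) = Y u"
      "snd fF' j u' \<in> Mor C" "Dom C (snd fF' j u') = X (fst fF' u')" "Cod C (snd fF' j u') = Y u'"
      "snd fF j m \<in> Mor C" "Dom C (snd fF j m) = X (fst fF m)" "Cod C (snd fF j m) = Y m"
      using assms(6,7) unfolding J_morphism_def by auto
    have lu: "fst fF u \<le> l" "fst fF' u' \<le> l" "fst fF m \<le> l"
      using l1 l2 l order_trans by blast+
    note P = isys[OF Xs lu(1)] isys[OF Xs lu(2)] isys[OF Xs lu(3)]
    note Q = isys[OF Ys m(1)] isys[OF Ys m(2)]
    define E where "E = Comp C (snd fF j m) (p (fst fF m) l)"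
    have E: "E \<in> Mor C" "Cod C E = Y m"
      using cat_comp[OF C B(7) P(7)] B P unfolding E_def by auto
    have k1: "Comp C (snd fF j u) (p (fst fF u) l) = Comp C (q u m) E"
      unfolding E_def using key[OF C Xs Ys assms(6) m(1) l1 l(1) e2[OF jj(2)]] .
    have k2': "Comp C (snd fF' j u') (p (fst fF' u') l) =
        Comp C (q u' m) (Comp C (snd fF' j m) (p (fst fF' m) l))"
      using key[OF C Xs Ys assms(7) m(2) l2 l(2) e3[OF jj(3)]] .
    have k3: "E = Comp C (snd fF' j m) (p (fst fF' m) l)"
      unfolding E_def using key2[OF C Xs assms(6,7) l3 l(3) e4[OF jj(4)]] .
    have k2: "Comp C (snd fF' j u') (p (fst fF' u') l) = Comp C (q u' m) E"
      using k2' k3 by simp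
    have "Comp C (Comp C (snd gG j v) (snd fF j u)) (p (fst fF u) l)
        = Comp C (snd gG j v) (Comp C (snd fF j u) (p (fst fF u) l))"
      using cat_assoc[OF C A(1) B(1) P(1)] A B P by simp
    also have "\<dots> = Comp C (snd gG j v) (Comp C (q u m) E)" using k1 by simp
    also have "\<dots> = Comp C (Comp C (snd gG j v) (q u m)) E"
      using cat_assoc[OF C A(1) Q(1) E(1)] A Q E by simp
    also have "\<dots> = Comp C (Comp C (snd gG' j v) (q u' m)) E" using e1[OF jj(1)] by simp
    also have "\<dots> = Comp C (snd gG' j v) (Comp C (q u' m) E)"
      using cat_assoc[OF C A(3) Q(4) E(1)] A Q E by simp
    also have "\<dots> = Comp C (snd gG' j v) (Comp C (snd fF' j u') (p (fst fF' u') l))" using k2 by simp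
    also have "\<dots> = Comp C (Comp C (snd gG' j v) (snd fF' j u')) (p (fst fF' u') l)"
      using cat_assoc[OF C A(3) B(4) P(4)] A B P by simp
    finally show "Comp C (Comp C (snd gG j v) (snd fF j u)) (p (fst fF u) l) =
      Comp C (Comp C (snd gG' j v) (snd fF' j u')) (p (fst fF' u') l)" .
  qed
  moreover have "fst fF u \<le> l" "fst fF' u' \<le> l" using l1 l2 l order_trans by blast+
  ultimately show "\<exists>l. fst (J_comp C gG fF) v \<le> l \<and> fst (J_comp C gG' fF') v \<le> l \<and>
        (\<exists>j0. \<forall>j'. j0 \<le> j' \<longrightarrow>
           Comp C (snd (J_comp C gG fF) j' v) (p (fst (J_comp C gG fF) v) l) =
           Comp C (snd (J_comp C gG' fF') j' v) (p (fst (J_comp C gG' fF') v) l))"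
    unfolding J_comp_def u_def u'_def by auto
qed

end
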